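(* For every $n\ge0$, $$|\mathcal{B}_{n+1}(213)|=\sum_{j=0}^{n}|\mathcal{G}(n;0,j)|.$$
   Context: A ballot permutation is a $\pi\in\mathfrak{S}_m$ such that every prefix $\pi_1\cdots\pi_i$ has at most as many descents ($\pi_j>\pi_{j+1}$) as ascents ($\pi_j<\pi_{j+1}$); $\mathcal{B}_m$ denotes the set of them, and $\mathcal{B}_m(213)$ the subset of those having no subsequence order-isomorphic to $213$. A Gessel walk is a lattice path confined to $\mathbb{N}^2$ with steps from $\{(0,1),(0,-1),(1,1),(-1,-1)\}$. $\mathcal{G}(n;i,j)$ is the set of $n$-step Gessel walks starting at $(0,i)$ and ending at $(0,j)$. *)

theory Defs
  imports "HOL-Combinatorics.Multiset_Permutations"
begin

(* Permutations of [m] = {1..m} are represented in one-line notation as lists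
   pi = [pi_1,...,pi_m]; list index k (0-based) corresponds to position k+1. *)

definition descents_prefix :: "nat list \<Rightarrow> nat \<Rightarrow> nat" where
  "descents_prefix p i = card {j. j + 1 < i \<and> p ! j > p ! (j + 1)}"

definition ascents_prefix :: "nat list \<Rightarrow> nat \<Rightarrow> nat" where
  "ascents_prefix p i = card {j. j + 1 < i \<and> p ! j < p ! (j + 1)}"

definition is_ballot :: "nat list \<Rightarrow> bool" where
  "is_ballot p \<longleftrightarrow> (\<forall>i \<le> length p. descents_prefix p i \<le> ascents_prefix p i)"

definition ballot_perms :: "nat \<Rightarrow> nat list set" where
  "ballot_perms m = {p \<in> permutations_of_set {1..m}. is_ballot p}"

definition contains_213 :: "nat list \<Rightarrow> bool" where
  "contains_213 p \<longleftrightarrow> (\<exists>i j k. i < j \<and> j < k \<and> k < length p \<and>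
                              p ! j < p ! i \<and> p ! i < p ! k)"

definition ballot_perms_213 :: "nat \<Rightarrow> nat list set" where
  "ballot_perms_213 m = {p \<in> ballot_perms m. \<not> contains_213 p}"

definition gessel_steps :: "(int \<times> int) set" where
  "gessel_steps = {(0, 1), (0, -1), (1, 1), (-1, -1)}"

definition walk_pos :: "int \<times> int \<Rightarrow> (int \<times> int) list \<Rightarrow> nat \<Rightarrow> int \<times> int" where
  "walk_pos s ws t = (fst s + sum_list (map fst (take t ws)), snd s + sum_list (map snd (take t ws)))"

definition gessel_walks :: "nat \<Rightarrow> nat \<Rightarrow> nat \<Rightarrow> (int \<times> int) list set" where
  "gessel_walks n i j = {ws. length ws = n \<and> set ws \<subseteq> gessel_steps \<and>
      (\<forall>t \<le> n. fst (walk_pos (0, int i) ws t) \<ge> 0 \<and> snd (walk_pos (0, int i) ws t) \<ge> 0) \<and>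
      walk_pos (0, int i) ws n = (0, int j)}"

end

theory Submission imports Defs begin


fun wa :: "nat \<Rightarrow> int \<Rightarrow> int \<Rightarrow> nat" where
  "wa 0 x y = (if x = 0 \<and> y = 0 then 1 else 0)"
| "wa (Suc n) x y = (if x < 0 \<or> y < 0 then 0 else
     wa n x (y-1) + wa n x (y+1) + wa n (x-1) (y-1) + wa n (x+1) (y+1))"

fun pa :: "nat \<Rightarrow> nat \<Rightarrow> int \<Rightarrow> nat" where
  "pa 0 k b = (if k = 1 \<and> b = 0 then 1 else 0)"
| "pa (Suc n) v b = (if b < 0 \<or> v = 0 \<or> v > n + 2 then 0 else
     (if 2 \<le> v then pa n (v-1) (b-1) else 0) +
     (\<Sum>k\<le>n. if v \<le> Suc k then pa n (Suc k) (b+1) else 0))"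

lemma wa_neg: "x < 0 \<or> y < 0 \<Longrightarrow> wa n x y = 0"
  by (cases n) auto

lemma pa_neg: "b < 0 \<Longrightarrow> pa n k b = 0"
  by (cases n) auto

lemma hockey: "(\<Sum>v\<le>n+1. if v \<le> k then (v choose h) else 0) = (if k \<le> n + 1 then Suc k choose Suc h else Suc (n+1) choose Suc h)"
proof -
  have "(\<Sum>v\<le>n+1. if v \<le> k then (v choose h) else 0) = (\<Sum>v\<in>{v. v \<le> n+1 \<and> v \<le> k}. v choose h)"
    by (simp add: sum.inter_filter[symmetric] atMost_def)
  also have "{v. v \<le> n+1 \<and> v \<le> k} = {..min k (n+1)}" by auto
  also have "(\<Sum>v\<le>min k (n+1). v choose h) = Suc (min k (n+1)) choose Suc h"
    by (rule sum_choose_upper)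
  finally show ?thesis by (simp add: min_def)
qed

lemma key: "wa n (int h) b = (\<Sum>k\<le>n. pa n (Suc k) b * (k choose h))"
proof (induction n arbitrary: h b)
  case 0
  then show ?case by auto
next
  case (Suc n)
  show ?case
  proof (cases "b < 0")
    case True
    then show ?thesis by (simp add: wa_neg pa_neg)
  next
    case False
    define P where "P k = pa n (Suc k) (b+1)" for k
    define Q where "Q k = pa n (Suc k) (b-1)" for k
    have S: "(\<Sum>v\<le>Suc n. pa (Suc n) (Suc v) b * (v choose h))
       = (\<Sum>v\<le>Suc n. (if 1 \<le> v then Q (v-1) else 0) * (v choose h))
         + (\<Sum>v\<le>Suc n. \<Sum>k\<le>n. (if v \<le> k then P k * (v choose h) else 0))"
    proof -
      have "pa (Suc n) (Suc v) b * (v choose h) = (if 1 \<le> v then Q (v-1) else 0) * (v choose h)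
         + (\<Sum>k\<le>n. (if v \<le> k then P k * (v choose h) else 0))" if "v \<le> Suc n" for v
        using False that by (simp add: P_def Q_def sum_distrib_right distrib_right cong: if_cong, intro sum.cong, auto)
      then show ?thesis by (simp add: sum.distrib)
    qed
    have S1: "(\<Sum>v\<le>Suc n. (if 1 \<le> v then Q (v-1) else 0) * (v choose h))
        = (\<Sum>u\<le>n. Q u * (Suc u choose h))"
      by (subst sum.atMost_Suc_shift) simp
    have S2: "(\<Sum>v\<le>Suc n. \<Sum>k\<le>n. (if v \<le> k then P k * (v choose h) else 0))
        = (\<Sum>k\<le>n. P k * (Suc k choose Suc h))"
    proof -
      have "(\<Sum>v\<le>Suc n. \<Sum>k\<le>n. (if v \<le> k then P k * (v choose h) else 0))
          = (\<Sum>k\<le>n. \<Sum>v\<le>Suc n. (if v \<le> k then P k * (v choose h) else 0))"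
        by (rule sum.swap)
      also have "\<dots> = (\<Sum>k\<le>n. P k * (\<Sum>v\<le>n+1. if v \<le> k then (v choose h) else 0))"
        by (simp add: sum_distrib_left if_distrib cong: if_cong)
      also have "\<dots> = (\<Sum>k\<le>n. P k * (Suc k choose Suc h))"
        by (rule sum.cong[OF refl], subst hockey, simp)
      finally show ?thesis .
    qed
    have IH1: "wa n (int h) (b+1) + wa n (int (Suc h)) (b+1) = (\<Sum>k\<le>n. P k * (Suc k choose Suc h))"
      unfolding Suc.IH[of h "b+1"] Suc.IH[of "Suc h" "b+1"] P_def
      by (simp add: sum.distrib[symmetric] algebra_simps)
    have IH2: "wa n (int h) (b-1) + wa n (int h - 1) (b-1) = (\<Sum>u\<le>n. Q u * (Suc u choose h))"
    proof (cases h)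
      case 0
      then show ?thesis using Suc.IH[of 0 "b-1"] by (simp add: Q_def wa_neg)
    next
      case (Suc h')
      have "int h - 1 = int h'" using Suc by simp
      then show ?thesis using Suc Suc.IH[of h "b-1"] Suc.IH[of h' "b-1"]
        by (simp add: Q_def sum.distrib[symmetric] algebra_simps)
    qed
    have "wa (Suc n) (int h) b = (wa n (int h) (b-1) + wa n (int h - 1) (b-1))
       + (wa n (int h) (b+1) + wa n (int (Suc h)) (b+1))"
      using False by (simp add: algebra_simps)
    also have "\<dots> = (\<Sum>v\<le>Suc n. pa (Suc n) (Suc v) b * (v choose h))"
      using S S1 S2 IH1 IH2 by simp
    finally show ?thesis .
  qed
qed


definition WS :: "nat \<Rightarrow> int \<Rightarrow> int \<Rightarrow> (int \<times> int) list set" where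
  "WS n x y = {ws. length ws = n \<and> set ws \<subseteq> gessel_steps \<and>
      (\<forall>t \<le> n. fst (walk_pos (0, 0) ws t) \<ge> 0 \<and> snd (walk_pos (0, 0) ws t) \<ge> 0) \<and>
      walk_pos (0, 0) ws n = (x, y)}"

lemma gessel_WS: "gessel_walks n 0 j = WS n 0 (int j)"
  unfolding gessel_walks_def WS_def by simp

lemma walk_pos_app_le: "t \<le> length ws \<Longrightarrow> walk_pos z (ws @ [s]) t = walk_pos z ws t"
  unfolding walk_pos_def by simp

lemma walk_pos_app_end: "walk_pos z (ws @ [s]) (Suc (length ws)) =
   (fst (walk_pos z ws (length ws)) + fst s, snd (walk_pos z ws (length ws)) + snd s)"
  unfolding walk_pos_def by simp

lemma finite_WS: "finite (WS n x y)"
proof -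
  have "WS n x y \<subseteq> {xs. set xs \<subseteq> gessel_steps \<and> length xs = n}" unfolding WS_def by auto
  moreover have "finite {xs. set xs \<subseteq> gessel_steps \<and> length xs = n}"
    by (rule finite_lists_length_eq) (simp add: gessel_steps_def)
  ultimately show ?thesis by (rule finite_subset)
qed

lemma WS_Suc: assumes "x \<ge> 0" "y \<ge> 0"
  shows "WS (Suc n) x y = (\<Union>s\<in>gessel_steps. (\<lambda>ws. ws @ [s]) ` WS n (x - fst s) (y - snd s))"
proof
  show "WS (Suc n) x y \<subseteq> (\<Union>s\<in>gessel_steps. (\<lambda>ws. ws @ [s]) ` WS n (x - fst s) (y - snd s))"
  proof
    fix ws' assume w: "ws' \<in> WS (Suc n) x y"
    hence len: "length ws' = Suc n" unfolding WS_def by auto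
    then obtain ws s where ws': "ws' = ws @ [s]"
      by (metis append_butlast_last_id length_0_conv nat.distinct(1))
    have lw: "length ws = n" using len ws' by simp
    have s: "s \<in> gessel_steps" using w ws' unfolding WS_def by auto
    have "ws \<in> WS n (x - fst s) (y - snd s)"
      unfolding WS_def
    proof (intro CollectI conjI allI impI)
      show "length ws = n" by fact
      show "set ws \<subseteq> gessel_steps" using w ws' unfolding WS_def by auto
      have Q: "fst (walk_pos (0, 0) ws t) \<ge> 0 \<and> snd (walk_pos (0, 0) ws t) \<ge> 0" if "t \<le> n" for t
      proof -
        have t1: "t \<le> Suc n" "t \<le> length ws" using lw that by auto
        have "fst (walk_pos (0, 0) ws' t) \<ge> 0 \<and> snd (walk_pos (0, 0) ws' t) \<ge> 0"
          using w t1(1) unfolding WS_def by blast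
        thus ?thesis using ws' walk_pos_app_le[OF t1(2), of "(0,0)" s] by simp
      qed
      fix t assume "t \<le> n"
      thus "fst (walk_pos (0, 0) ws t) \<ge> 0" "snd (walk_pos (0, 0) ws t) \<ge> 0" using Q by auto
    next
      have "walk_pos (0,0) ws' (Suc n) = (x,y)" using w unfolding WS_def by auto
      thus "walk_pos (0, 0) ws n = (x - fst s, y - snd s)"
        using walk_pos_app_end[of "(0,0)" ws s] ws' lw by (auto simp: prod_eq_iff)
    qed
    thus "ws' \<in> (\<Union>s\<in>gessel_steps. (\<lambda>ws. ws @ [s]) ` WS n (x - fst s) (y - snd s))"
      using s ws' by blast
  qed
next
  show "(\<Union>s\<in>gessel_steps. (\<lambda>ws. ws @ [s]) ` WS n (x - fst s) (y - snd s)) \<subseteq> WS (Suc n) x y"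
  proof
    fix ws' assume "ws' \<in> (\<Union>s\<in>gessel_steps. (\<lambda>ws. ws @ [s]) ` WS n (x - fst s) (y - snd s))"
    then obtain s ws where s: "s \<in> gessel_steps" and w: "ws \<in> WS n (x - fst s) (y - snd s)"
      and ws': "ws' = ws @ [s]" by blast
    have lw: "length ws = n" using w unfolding WS_def by auto
    have endp: "walk_pos (0,0) (ws @ [s]) (Suc n) = (x, y)"
      using walk_pos_app_end[of "(0,0)" ws s] w lw unfolding WS_def by auto
    show "ws' \<in> WS (Suc n) x y"
      unfolding WS_def ws'
    proof (intro CollectI conjI allI impI)
      show "length (ws @ [s]) = Suc n" using lw by simp
      show "set (ws @ [s]) \<subseteq> gessel_steps" using w s unfolding WS_def by auto
      show "walk_pos (0, 0) (ws @ [s]) (Suc n) = (x, y)" by fact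
      have Q: "fst (walk_pos (0, 0) (ws @ [s]) t) \<ge> 0 \<and> snd (walk_pos (0, 0) (ws @ [s]) t) \<ge> 0"
        if t: "t \<le> Suc n" for t
      proof (cases "t = Suc n")
        case True thus ?thesis using endp assms by simp
      next
        case False
        hence "t \<le> n" using t by simp
        thus ?thesis using w lw walk_pos_app_le[of t ws "(0,0)" s] unfolding WS_def by auto
      qed
      fix t assume "t \<le> Suc n"
      thus "fst (walk_pos (0, 0) (ws @ [s]) t) \<ge> 0" "snd (walk_pos (0, 0) (ws @ [s]) t) \<ge> 0"
        using Q by auto
    qed
  qed
qed

lemma card_WS: "card (WS n x y) = wa n x y"
proof (induction n arbitrary: x y)
  case 0
  have "WS 0 x y = (if x = 0 \<and> y = 0 then {[]} else {})"
    unfolding WS_def walk_pos_def by auto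
  then show ?case by simp
next
  case (Suc n)
  show ?case
  proof (cases "x < 0 \<or> y < 0")
    case True
    hence "WS (Suc n) x y = {}" unfolding WS_def by fastforce
    then show ?thesis using True by simp
  next
    case False
    have eq: "WS (Suc n) x y = (\<Union>s\<in>gessel_steps. (\<lambda>ws. ws @ [s]) ` WS n (x - fst s) (y - snd s))"
      using False by (intro WS_Suc) auto
    have "card (WS (Suc n) x y) = (\<Sum>s\<in>gessel_steps. card ((\<lambda>ws. ws @ [s]) ` WS n (x - fst s) (y - snd s)))"
      unfolding eq
      by (intro card_UN_disjoint) (auto simp: gessel_steps_def finite_WS)
    also have "\<dots> = (\<Sum>s\<in>gessel_steps. card (WS n (x - fst s) (y - snd s)))"
      by (intro sum.cong refl card_image) (auto simp: inj_on_def)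
    also have "\<dots> = wa (Suc n) x y"
      using False by (simp add: gessel_steps_def Suc.IH algebra_simps)
    finally show ?thesis .
  qed
qed


definition sh :: "nat \<Rightarrow> nat \<Rightarrow> nat" where "sh v x = (if x < v then x else x + 1)"
definition ext :: "nat list \<Rightarrow> nat \<Rightarrow> nat list" where "ext q v = map (sh v) q @ [v]"
definition bal :: "nat list \<Rightarrow> int" where
  "bal p = int (ascents_prefix p (length p)) - int (descents_prefix p (length p))"

lemma sh_less_iff[simp]: "sh v x < sh v y \<longleftrightarrow> x < y" by (auto simp: sh_def)
lemma sh_inj: "inj (sh v)" by (auto simp: inj_def sh_def split: if_splits)
lemma sh_lt_v[simp]: "sh v x < v \<longleftrightarrow> x < v" by (auto simp: sh_def)
lemma v_lt_sh[simp]: "v < sh v x \<longleftrightarrow> v \<le> x" by (auto simp: sh_def)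

lemma length_ext[simp]: "length (ext q v) = Suc (length q)" by (simp add: ext_def)
lemma nth_ext1: "i < length q \<Longrightarrow> ext q v ! i = sh v (q ! i)" by (simp add: ext_def nth_append)
lemma nth_ext2: "ext q v ! length q = v" by (simp add: ext_def nth_append)
lemma last_ext[simp]: "last (ext q v) = v" by (simp add: ext_def)
lemma ext_inj: "ext q v = ext q' v \<Longrightarrow> q = q'"
  unfolding ext_def using sh_inj by (simp add: inj_map_eq_map)

lemma desc_ext: "i \<le> length q \<Longrightarrow> descents_prefix (ext q v) i = descents_prefix q i"
  unfolding descents_prefix_def
  by (rule arg_cong[where f=card], rule Collect_cong) (auto simp: nth_ext1)
lemma asc_ext: "i \<le> length q \<Longrightarrow> ascents_prefix (ext q v) i = ascents_prefix q i"
  unfolding ascents_prefix_def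
  by (rule arg_cong[where f=card], rule Collect_cong) (auto simp: nth_ext1)

lemma card_step: "card {j. j + 1 < Suc i \<and> P j} = card {j. j + 1 < i \<and> P j} + (if 0 < i \<and> P (i - 1) then 1 else 0)"
proof (cases i)
  case 0 then show ?thesis by simp
next
  case (Suc i')
  have "{j. j + 1 < Suc i \<and> P j} = {j. j + 1 < i \<and> P j} \<union> (if P i' then {i'} else {})"
    using Suc by (auto simp: less_Suc_eq)
  moreover have "finite {j. j + 1 < i \<and> P j}" by (rule finite_subset[of _ "{..<i}"]) auto
  moreover have "i' \<notin> {j. j + 1 < i \<and> P j}" using Suc by auto
  ultimately show ?thesis using Suc by auto
qed

lemma desc_Suc: "descents_prefix p (Suc i) = descents_prefix p i + (if 0 < i \<and> p ! (i - 1) > p ! i then 1 else 0)"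
  unfolding descents_prefix_def using card_step[of i "\<lambda>j. p ! j > p ! (j+1)"] by (cases i) auto
lemma asc_Suc: "ascents_prefix p (Suc i) = ascents_prefix p i + (if 0 < i \<and> p ! (i - 1) < p ! i then 1 else 0)"
  unfolding ascents_prefix_def using card_step[of i "\<lambda>j. p ! j < p ! (j+1)"] by (cases i) auto

lemma asc_le: "ascents_prefix p i \<le> i - 1"
proof -
  have "{j. j + 1 < i \<and> p ! j < p ! (j + 1)} \<subseteq> {..<i-1}" by auto
  hence "ascents_prefix p i \<le> card {..<i-1}" unfolding ascents_prefix_def by (intro card_mono) auto
  thus ?thesis by simp
qed

lemma bal_ext: assumes "q \<noteq> []"
  shows "bal (ext q v) = bal q + (if last q < v then 1 else -1)"
proof -
  let ?m = "length q"
  have m: "0 < ?m" using assms by simp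
  have l: "ext q v ! (?m - 1) = sh v (last q)" using m by (simp add: nth_ext1 last_conv_nth assms)
  have "descents_prefix (ext q v) (Suc ?m) = descents_prefix q ?m + (if v \<le> last q then 1 else 0)"
    using desc_Suc[of "ext q v" ?m] m l by (simp add: desc_ext nth_ext2)
  moreover have "ascents_prefix (ext q v) (Suc ?m) = ascents_prefix q ?m + (if last q < v then 1 else 0)"
    using asc_Suc[of "ext q v" ?m] m l by (simp add: asc_ext nth_ext2)
  ultimately show ?thesis unfolding bal_def by auto
qed

lemma ballot_ext: "is_ballot (ext q v) \<longleftrightarrow> is_ballot q \<and> bal (ext q v) \<ge> 0"
  unfolding is_ballot_def bal_def
  by (auto simp: le_Suc_eq desc_ext asc_ext)

lemma ballot_bal: "is_ballot p \<Longrightarrow> bal p \<ge> 0"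
  unfolding is_ballot_def bal_def by auto

lemma perm_ext: assumes q: "q \<in> permutations_of_set {1..m}" and v: "1 \<le> v" "v \<le> Suc m"
  shows "ext q v \<in> permutations_of_set {1..Suc m}"
proof -
  have sq: "set q = {1..m}" and dq: "distinct q" using q by (auto simp: permutations_of_set_def)
  have "sh v ` {1..m} = {1..Suc m} - {v}"
  proof
    show "sh v ` {1..m} \<subseteq> {1..Suc m} - {v}" by (auto simp: sh_def)
    show "{1..Suc m} - {v} \<subseteq> sh v ` {1..m}"
    proof
      fix y assume y: "y \<in> {1..Suc m} - {v}"
      show "y \<in> sh v ` {1..m}"
      proof (cases "y < v")
        case True thus ?thesis using y v by (intro image_eqI[of _ _ y]) (auto simp: sh_def)
      next
        case False thus ?thesis using y v by (intro image_eqI[of _ _ "y - 1"]) (auto simp: sh_def)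
      qed
    qed
  qed
  hence "set (ext q v) = {1..Suc m}" using v by (auto simp: ext_def sq)
  moreover have "distinct (ext q v)"
    using dq sh_inj \<open>sh v ` {1..m} = {1..Suc m} - {v}\<close>
    by (auto simp: ext_def sq distinct_map inj_on_def inj_def)
  ultimately show ?thesis by (auto simp: permutations_of_set_def)
qed

lemma c213_ext: assumes q: "q \<in> permutations_of_set {1..m}" and m: "1 \<le> m" and v: "v \<le> Suc m"
  shows "contains_213 (ext q v) \<longleftrightarrow> contains_213 q \<or> Suc (last q) < v"
proof -
  have sq: "set q = {1..m}" and dq: "distinct q"
    using q by (auto simp: permutations_of_set_def)
  have lq: "length q = m" using distinct_card[OF dq] sq by simp
  have qne: "q \<noteq> []" using lq m by auto
  define k0 where "k0 = last q"
  have k0: "q ! (m - 1) = k0" using qne lq by (simp add: k0_def last_conv_nth)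
  show ?thesis
  proof
    assume "contains_213 (ext q v)"
    then obtain i j k where ijk: "i < j" "j < k" "k < Suc m"
      and c: "ext q v ! j < ext q v ! i" "ext q v ! i < ext q v ! k"
      unfolding contains_213_def length_ext lq by blast
    show "contains_213 q \<or> Suc (last q) < v"
    proof (cases "k < m")
      case True
      hence "q ! j < q ! i" "q ! i < q ! k" using c ijk lq by (auto simp: nth_ext1)
      thus ?thesis using ijk True lq unfolding contains_213_def by blast
    next
      case False
      hence km: "k = m" using ijk by simp
      have a: "q ! j < q ! i" "q ! i < v" using c ijk km lq by (auto simp: nth_ext1 nth_ext2)
      consider "q ! i < k0" | "q ! i = k0" | "k0 < q ! i" by linarith
      then show ?thesis
      proof cases
        case 1
        have "j \<noteq> m - 1" using a 1 k0 by auto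
        hence "j < m - 1" using ijk km by simp
        hence "contains_213 q" unfolding contains_213_def
          using ijk a 1 k0 lq m by (intro exI[of _ i] exI[of _ j] exI[of _ "m-1"]) auto
        thus ?thesis by simp
      next
        case 2
        have "i = m - 1" using 2 k0 dq ijk km lq nth_eq_iff_index_eq[OF dq, of i "m-1"] by simp
        thus ?thesis using ijk km by simp
      next
        case 3 thus ?thesis using a k0_def by simp
      qed
    qed
  next
    assume "contains_213 q \<or> Suc (last q) < v"
    then show "contains_213 (ext q v)"
    proof
      assume "contains_213 q"
      then obtain i j k where ijk: "i < j" "j < k" "k < m" "q ! j < q ! i" "q ! i < q ! k"
        unfolding contains_213_def lq by auto
      thus ?thesis unfolding contains_213_def
        by (intro exI[of _ i] exI[of _ j] exI[of _ k]) (auto simp: nth_ext1 lq)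
    next
      assume s: "Suc (last q) < v"
      have "Suc k0 \<in> set q" using s v sq k0_def qne sq
        by (metis atLeastAtMost_iff last_in_set le_SucI less_Suc_eq_le order.strict_trans2) 
      then obtain i where i: "i < m" "q ! i = Suc k0" using lq by (auto simp: in_set_conv_nth)
      have "i \<noteq> m - 1" using i k0 by auto
      hence "i < m - 1" using i by simp
      thus ?thesis unfolding contains_213_def using s i k0 m lq k0_def
        by (intro exI[of _ i] exI[of _ "m-1"] exI[of _ m]) (auto simp: nth_ext1 nth_ext2 sh_def)
    qed
  qed
qed

lemma surj_ext: assumes p: "p \<in> permutations_of_set {1..Suc m}"
  shows "\<exists>q \<in> permutations_of_set {1..m}. p = ext q (last p)"
proof -
  have sp: "set p = {1..Suc m}" and dp: "distinct p"
    using p by (auto simp: permutations_of_set_def)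
  have lp: "length p = Suc m" using distinct_card[OF dp] sp by simp
  define v where "v = last p"
  have pne: "p \<noteq> []" using lp by auto
  have pdec: "p = butlast p @ [v]" using pne by (simp add: v_def)
  have vnot: "v \<notin> set (butlast p)" using dp pdec by (metis distinct_append disjoint_iff list.set_intros(1))
  define u where "u x = (if x > v then x - 1 else x)" for x
  define q where "q = map u (butlast p)"
  have v1: "1 \<le> v" using sp pne by (metis atLeastAtMost_iff last_in_set v_def)
  have shu: "sh v (u x) = x" if "x \<noteq> v" "1 \<le> x" for x using that v1 by (auto simp: sh_def u_def)
  have bset: "set (butlast p) \<subseteq> {1..Suc m}" using sp by (auto dest: in_set_butlastD)
  have mq: "map (sh v) q = butlast p"
    unfolding q_def map_map
    by (rule map_idI) (use shu vnot bset in force)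
  have dq: "distinct q" using mq dp by (metis distinct_butlast distinct_map)
  have lq: "length q = m" using lp by (simp add: q_def)
  have "set q \<subseteq> {1..m}"
  proof
    fix x assume "x \<in> set q"
    then obtain y where y: "y \<in> set (butlast p)" "x = u y" by (auto simp: q_def)
    hence "y \<noteq> v" "y \<in> {1..Suc m}" using vnot bset by auto
    moreover have "v \<le> Suc m" using sp pne by (metis atLeastAtMost_iff last_in_set v_def)
    ultimately show "x \<in> {1..m}" using y v1 sp pne unfolding u_def
      by (auto split: if_splits)
  qed
  moreover have "card (set q) = card {1..m}" using dq lq by (simp add: distinct_card)
  ultimately have "set q = {1..m}" by (intro card_subset_eq) auto
  hence "q \<in> permutations_of_set {1..m}" using dq by auto
  moreover have "p = ext q v" unfolding ext_def mq using pdec .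
  ultimately show ?thesis unfolding v_def by blast
qed


definition PS :: "nat \<Rightarrow> nat \<Rightarrow> int \<Rightarrow> nat list set" where
  "PS n k b = {p \<in> permutations_of_set {1..Suc n}. is_ballot p \<and> \<not> contains_213 p \<and> last p = k \<and> bal p = b}"

lemma finite_PS: "finite (PS n k b)"
  by (rule finite_subset[OF _ finite_permutations_of_set[of "{1..Suc n}"]]) (auto simp: PS_def)

lemma one_facts: "is_ballot [1]" "bal [1] = 0" "\<not> contains_213 [1]"
proof -
  have "descents_prefix [1] i = 0" "ascents_prefix [1] i = 0" if "i \<le> 1" for i
    using that unfolding descents_prefix_def ascents_prefix_def by auto
  thus "is_ballot [1]" "bal [1] = 0" unfolding is_ballot_def bal_def by auto
  show "\<not> contains_213 [1]" unfolding contains_213_def by auto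
qed

lemma card_PS: "card (PS n k b) = pa n k b"
proof (induction n arbitrary: k b)
  case 0
  have "PS 0 k b = (if k = 1 \<and> b = 0 then {[1]} else {})"
    unfolding PS_def using one_facts by auto
  then show ?case by simp
next
  case (Suc n)
  show ?case
  proof (cases "b < 0 \<or> k = 0 \<or> k > n + 2")
    case True
    have "PS (Suc n) k b = {}"
    proof (rule ccontr)
      assume "PS (Suc n) k b \<noteq> {}"
      then obtain p where p: "p \<in> PS (Suc n) k b" by auto
      hence sp: "set p = {1..Suc (Suc n)}" and "is_ballot p" "last p = k" "bal p = b"
        unfolding PS_def permutations_of_set_def by auto
      moreover have "p \<noteq> []" using sp by auto
      ultimately have "k \<in> {1..Suc (Suc n)}" "b \<ge> 0" using ballot_bal by (metis last_in_set)+
      thus False using True by auto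
    qed
    then show ?thesis using True by simp
  next
    case False
    hence b: "b \<ge> 0" and v: "1 \<le> k" "k \<le> Suc (Suc n)" by auto
    define A where "A = (if 2 \<le> k then PS n (k-1) (b-1) else {})"
    define K where "K = {k'. k' \<le> n \<and> k \<le> Suc k'}"
    define U where "U = (\<Union>k'\<in>K. PS n (Suc k') (b+1))"
    have eq: "PS (Suc n) k b = (\<lambda>q. ext q k) ` (A \<union> U)"
    proof
      show "PS (Suc n) k b \<subseteq> (\<lambda>q. ext q k) ` (A \<union> U)"
      proof
        fix p assume p: "p \<in> PS (Suc n) k b"
        hence pp: "p \<in> permutations_of_set {1..Suc (Suc n)}" and pb: "is_ballot p"
          and pc: "\<not> contains_213 p" and pl: "last p = k" and pbal: "bal p = b"
          unfolding PS_def by auto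
        obtain q where q: "q \<in> permutations_of_set {1..Suc n}" and pq: "p = ext q k"
          using surj_ext[OF pp] pl by auto
        have sq: "set q = {1..Suc n}" using q by (auto simp: permutations_of_set_def)
        hence qne: "q \<noteq> []" by auto
        have lq: "last q \<in> {1..Suc n}" using sq qne last_in_set by blast
        have c1: "\<not> contains_213 q" "k \<le> Suc (last q)"
          using pc c213_ext[OF q _ v(2)] pq by auto
        have qb: "is_ballot q" using pb pq ballot_ext by auto
        have bq: "bal p = bal q + (if last q < k then 1 else -1)" using bal_ext[OF qne] pq by simp
        show "p \<in> (\<lambda>q. ext q k) ` (A \<union> U)"
        proof (cases "last q < k")
          case True
          hence "last q = k - 1" "2 \<le> k" using c1 lq by auto
          hence "q \<in> A" unfolding A_def PS_def using q qb c1 bq pbal True by auto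
          thus ?thesis using pq by blast
        next
          case False
          define k' where "k' = last q - 1"
          have "k' \<in> K" "last q = Suc k'" using False lq unfolding K_def k'_def by auto
          moreover have "q \<in> PS n (Suc k') (b+1)" unfolding PS_def
            using q qb c1 bq pbal False \<open>last q = Suc k'\<close> by auto
          ultimately have "q \<in> U" unfolding U_def by blast
          thus ?thesis using pq by blast
        qed
      qed
    next
      show "(\<lambda>q. ext q k) ` (A \<union> U) \<subseteq> PS (Suc n) k b"
      proof
        fix p assume "p \<in> (\<lambda>q. ext q k) ` (A \<union> U)"
        then obtain q where qAU: "q \<in> A \<union> U" and pq: "p = ext q k" by auto
        obtain k1 where qin: "q \<in> PS n k1 (bal q)" and
          kk: "(k1 = k - 1 \<and> 2 \<le> k \<and> bal q = b - 1) \<or> (k \<le> k1 \<and> bal q = b + 1)"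
          using qAU unfolding A_def U_def K_def PS_def by (auto split: if_splits)
        have q: "q \<in> permutations_of_set {1..Suc n}" and qb: "is_ballot q"
          and qc: "\<not> contains_213 q" and ql: "last q = k1" using qin unfolding PS_def by auto
        have sq: "set q = {1..Suc n}" using q by (auto simp: permutations_of_set_def)
        hence qne: "q \<noteq> []" by auto
        have "p \<in> permutations_of_set {1..Suc (Suc n)}" using perm_ext[OF q v] pq by simp
        moreover have "\<not> contains_213 p" using c213_ext[OF q _ v(2)] qc kk ql pq by auto
        moreover have "bal p = b" using bal_ext[OF qne, of k] kk ql pq by auto
        moreover have "is_ballot p" using ballot_ext[of q k] qb pq \<open>bal p = b\<close> b by simp
        moreover have "last p = k" using pq by simp
        ultimately show "p \<in> PS (Suc n) k b" unfolding PS_def by auto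
      qed
    qed
    have "card (PS (Suc n) k b) = card (A \<union> U)"
      unfolding eq by (rule card_image) (auto simp: inj_on_def dest: ext_inj)
    also have "\<dots> = card A + card U"
    proof (rule card_Un_disjoint)
      show "finite A" by (simp add: A_def finite_PS)
      show "finite U" by (simp add: U_def K_def finite_PS)
      show "A \<inter> U = {}" unfolding A_def U_def K_def PS_def by auto
    qed
    also have "card U = (\<Sum>k'\<in>K. card (PS n (Suc k') (b+1)))"
      unfolding U_def
      by (rule card_UN_disjoint) (auto simp: K_def finite_PS PS_def)
    also have "\<dots> = (\<Sum>k'\<le>n. if k \<le> Suc k' then pa n (Suc k') (b+1) else 0)"
    proof -
      have "K = {k' \<in> {..n}. k \<le> Suc k'}" unfolding K_def by auto
      hence "(\<Sum>k'\<in>K. card (PS n (Suc k') (b+1))) = (\<Sum>k'\<in>{k' \<in> {..n}. k \<le> Suc k'}. pa n (Suc k') (b+1))"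
        by (simp add: Suc.IH)
      also have "\<dots> = (\<Sum>k'\<le>n. if k \<le> Suc k' then pa n (Suc k') (b+1) else 0)"
        by (rule sum.inter_filter) simp
      finally show ?thesis .
    qed
    also have "card A = (if 2 \<le> k then pa n (k-1) (b-1) else 0)"
      by (simp add: A_def Suc.IH)
    finally show ?thesis using False by simp
  qed
qed


lemma bal_le: "length p = Suc n \<Longrightarrow> bal p \<le> int n"
  unfolding bal_def using asc_le[of p "length p"] by simp

theorem theorem1p4:
  fixes n :: nat
  shows "card (ballot_perms_213 (n + 1)) = (\<Sum>j = 0..n. card (gessel_walks n 0 j))"
proof -
  have eq: "ballot_perms_213 (n + 1) = (\<Union>k'\<le>n. \<Union>b\<in>{0..int n}. PS n (Suc k') b)"
  proof
    show "ballot_perms_213 (n + 1) \<subseteq> (\<Union>k'\<le>n. \<Union>b\<in>{0..int n}. PS n (Suc k') b)"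
    proof
      fix p assume p: "p \<in> ballot_perms_213 (n + 1)"
      hence pp: "p \<in> permutations_of_set {1..Suc n}" and pb: "is_ballot p" and pc: "\<not> contains_213 p"
        unfolding ballot_perms_213_def ballot_perms_def by auto
      have sp: "set p = {1..Suc n}" and dp: "distinct p" using pp by (auto simp: permutations_of_set_def)
      have lp: "length p = Suc n" using distinct_card[OF dp] sp by simp
      have pne: "p \<noteq> []" using sp by auto
      have "last p \<in> {1..Suc n}" using sp pne last_in_set by blast
      hence k': "last p - 1 \<le> n" "last p = Suc (last p - 1)" by auto
      have "bal p \<in> {0..int n}" using ballot_bal[OF pb] bal_le[OF lp] by auto
      thus "p \<in> (\<Union>k'\<le>n. \<Union>b\<in>{0..int n}. PS n (Suc k') b)"
        using k' pp pb pc unfolding PS_def by (intro UN_I[of "last p - 1"] UN_I[of "bal p"]) auto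
    qed
    show "(\<Union>k'\<le>n. \<Union>b\<in>{0..int n}. PS n (Suc k') b) \<subseteq> ballot_perms_213 (n + 1)"
      unfolding ballot_perms_213_def ballot_perms_def PS_def by auto
  qed
  have "card (ballot_perms_213 (n + 1)) = (\<Sum>k'\<le>n. card (\<Union>b\<in>{0..int n}. PS n (Suc k') b))"
    unfolding eq
  proof (rule card_UN_disjoint)
    show "finite {..n}" by simp
    show "\<forall>i\<in>{..n}. finite (\<Union>b\<in>{0..int n}. PS n (Suc i) b)" by (simp add: finite_PS)
    show "\<forall>i\<in>{..n}. \<forall>j\<in>{..n}. i \<noteq> j \<longrightarrow> (\<Union>b\<in>{0..int n}. PS n (Suc i) b) \<inter> (\<Union>b\<in>{0..int n}. PS n (Suc j) b) = {}"
      unfolding PS_def by auto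
  qed
  also have "\<dots> = (\<Sum>k'\<le>n. \<Sum>b\<in>{0..int n}. pa n (Suc k') b)"
  proof (rule sum.cong[OF refl])
    fix k' show "card (\<Union>b\<in>{0..int n}. PS n (Suc k') b) = (\<Sum>b\<in>{0..int n}. pa n (Suc k') b)"
      by (subst card_UN_disjoint) (simp_all add: finite_PS card_PS, unfold PS_def, blast)
  qed
  also have "\<dots> = (\<Sum>b\<in>{0..int n}. \<Sum>k'\<le>n. pa n (Suc k') b)" by (rule sum.swap)
  also have "\<dots> = (\<Sum>j = 0..n. \<Sum>k'\<le>n. pa n (Suc k') (int j))"
    by (subst image_int_atLeastAtMost[symmetric, of 0 n, simplified], subst sum.reindex) (auto simp: inj_on_def)
  also have "\<dots> = (\<Sum>j = 0..n. card (gessel_walks n 0 j))"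
  proof (rule sum.cong[OF refl])
    fix j
    have "card (gessel_walks n 0 j) = wa n (int 0) (int j)" by (simp add: gessel_WS card_WS)
    also have "\<dots> = (\<Sum>k'\<le>n. pa n (Suc k') (int j))" by (subst key) simp
    finally show "(\<Sum>k'\<le>n. pa n (Suc k') (int j)) = card (gessel_walks n 0 j)" by simp
  qed
  finally show ?thesis .
qed


end
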